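(* Let $c_2,c_3,a_0,a_1,a_2,b_0,b_1$ be constants, $\mu(t)=t^2+c_2t+c_3$, $\phi=a_0\mu(t)^2+a_1\mu(t)+a_2$, $\psi=b_0\mu(t)+b_1$, $\lambda_n=n((n-1)a_0+b_0)$, and $\operatorname{L}_n=\phi\,\mathbb{D}^2+\psi\,\mathbb{S}\mathbb{D}-\lambda_n I$. Assume that for each $n\ge0$ there is a unique monic polynomial $P_n$ of degree $n$ in $\mu(t)$ with $\operatorname{L}_n(P_n)=0$ (i.e. $\phi\,\mathbb{D}^2P_n+\psi\,\mathbb{S}\mathbb{D}P_n=\lambda_nP_n$), and write $P_n=\vartheta_n+p_{1,n}\vartheta_{n-1}+p_{2,n}\vartheta_{n-2}+\cdots$. Then there exist sequences $\{\beta_n\}$ and $\{\gamma_n\}$ such that $$P_{n+1}=(\mu(t)-\beta_n)P_n-\gamma_nP_{n-1},$$ where $$\beta_n=p_{1,n}+f_n+\frac{k_{1,n+1}}{\lambda_n-\lambda_{n+1}},\qquad \gamma_n=\frac{t_n}{\lambda_{n-1}-\lambda_{n+1}},$$ $$t_n=k_{2,n+1}+(f_n+p_{1,n}-\beta_n)k_{1,n}+(p_{1,n}f_{n-1}+p_{2,n}-\beta_np_{1,n})(\lambda_{n-1}-\lambda_{n+1}).$$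
   Context: Operators: $\mathbb{D}f(t)=\frac{f(t+1/2)-f(t-1/2)}{\mu(t+1/2)-\mu(t-1/2)}$, $\mathbb{S}f(t)=\frac{f(t+1/2)+f(t-1/2)}{2}$, acting on polynomials in $\mu(t)$. Basis: $\vartheta_n(t)=(-4)^{-n}(2t+1/2+c_2)_n(-2t+1/2-c_2)_n$ (Pochhammer symbols), $\vartheta_k=0$ for $k<0$, monic of degree $n$ in $\mu(t)$, with $\mu(t)\vartheta_n=\vartheta_{n+1}+f_n\vartheta_n$ and $\mathbb{S}\vartheta_n=\vartheta_n+g_n\vartheta_{n-1}$, where $f_n=-\frac{c_2^2}{4}+\frac{(2n+1)^2}{16}+c_3$, $g_n=\frac{n(2n-1)}4$. Constants: $k_{1,j}=a_0j(j-1)(f_{j-1}+f_{j-2})+b_0jf_{j-1}+a_1j(j-1)+b_0jg_{j-1}+b_1j$, $k_{2,j}=a_0j(j-1)f_{j-2}^2+a_1j(j-1)f_{j-2}+b_0jg_{j-1}f_{j-2}+a_2j(j-1)+b_1jg_{j-1}$. *)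

theory Defs
  imports Complex_Main "HOL-Computational_Algebra.Polynomial"
begin

definition mu :: "real \<Rightarrow> real \<Rightarrow> real \<Rightarrow> real" where
  "mu c2 c3 t = t^2 + c2 * t + c3"

definition Dop :: "real \<Rightarrow> real \<Rightarrow> (real \<Rightarrow> real) \<Rightarrow> real \<Rightarrow> real" where
  "Dop c2 c3 f t = (f (t + 1/2) - f (t - 1/2)) / (mu c2 c3 (t + 1/2) - mu c2 c3 (t - 1/2))"

definition Sop :: "(real \<Rightarrow> real) \<Rightarrow> real \<Rightarrow> real" where
  "Sop f t = (f (t + 1/2) + f (t - 1/2)) / 2"

definition theta :: "real \<Rightarrow> nat \<Rightarrow> real \<Rightarrow> real" where
  "theta c2 n t = inverse ((-4) ^ n) * pochhammer (2*t + 1/2 + c2) n * pochhammer (-2*t + 1/2 - c2) n"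

definition fseq :: "real \<Rightarrow> real \<Rightarrow> int \<Rightarrow> real" where
  "fseq c2 c3 n = - (c2^2 / 4) + (2 * of_int n + 1)^2 / 16 + c3"

definition gseq :: "int \<Rightarrow> real" where
  "gseq n = of_int n * (2 * of_int n - 1) / 4"

definition lam :: "real \<Rightarrow> real \<Rightarrow> int \<Rightarrow> real" where
  "lam a0 b0 n = of_int n * ((of_int n - 1) * a0 + b0)"

definition k1 :: "real \<Rightarrow> real \<Rightarrow> real \<Rightarrow> real \<Rightarrow> real \<Rightarrow> real \<Rightarrow> int \<Rightarrow> real" where
  "k1 c2 c3 a0 a1 b0 b1 j =
     a0 * of_int j * (of_int j - 1) * (fseq c2 c3 (j - 1) + fseq c2 c3 (j - 2))
     + b0 * of_int j * fseq c2 c3 (j - 1) + a1 * of_int j * (of_int j - 1)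
     + b0 * of_int j * gseq (j - 1) + b1 * of_int j"

definition k2 :: "real \<Rightarrow> real \<Rightarrow> real \<Rightarrow> real \<Rightarrow> real \<Rightarrow> real \<Rightarrow> real \<Rightarrow> int \<Rightarrow> real" where
  "k2 c2 c3 a0 a1 a2 b0 b1 j =
     a0 * of_int j * (of_int j - 1) * (fseq c2 c3 (j - 2))^2
     + a1 * of_int j * (of_int j - 1) * fseq c2 c3 (j - 2)
     + b0 * of_int j * gseq (j - 1) * fseq c2 c3 (j - 2)
     + a2 * of_int j * (of_int j - 1) + b1 * of_int j * gseq (j - 1)"

text \<open>The identity is required at every t where all denominators occurring in D^2 and S D
  are nonzero (2t + c2 not in {-1,0,1}); for polynomials this is the polynomial identity.\<close>
definition L_zero :: "real \<Rightarrow> real \<Rightarrow> real \<Rightarrow> real \<Rightarrow> real \<Rightarrow> real \<Rightarrow> real \<Rightarrow> nat \<Rightarrow> real poly \<Rightarrow> bool" where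
  "L_zero c2 c3 a0 a1 a2 b0 b1 n q \<longleftrightarrow>
     (\<forall>t. 2*t + c2 \<notin> {-1, 0, 1} \<longrightarrow>
        (let F = (\<lambda>s. poly q (mu c2 c3 s));
             m = mu c2 c3 t
         in (a0 * m^2 + a1 * m + a2) * Dop c2 c3 (Dop c2 c3 F) t
            + (b0 * m + b1) * Sop (Dop c2 c3 F) t
            = lam a0 b0 (int n) * F t))"

end

theory Submission
  imports Defs
begin


definition E :: "nat \<Rightarrow> real \<Rightarrow> real" where
  "E n v = (\<Prod>i<n. (v - (real i + 1/2)) * (v + (real i + 1/2)))"

lemma E_0[simp]: "E 0 v = 1" by (simp add: E_def)
lemma E_Suc: "E (Suc n) v = E n v * (v^2 - (real n + 1/2)^2)"
  by (simp add: E_def algebra_simps power2_eq_square)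

lemma E_plus: "E (Suc n) (v+1) = E n v * (v + real n + 1/2) * (v + real n + 3/2)"
proof (induction n)
  case 0 then show ?case by (simp add: E_Suc power2_eq_square field_simps)
next
  case (Suc n)
  show ?case using Suc by (simp only: E_Suc[of "Suc n"] E_Suc[of n v]) (simp add: power2_eq_square field_simps)
qed

lemma E_minus: "E (Suc n) (v-1) = E n v * (v - real n - 1/2) * (v - real n - 3/2)"
proof (induction n)
  case 0 then show ?case by (simp add: E_Suc power2_eq_square field_simps)
next
  case (Suc n)
  show ?case using Suc by (simp only: E_Suc[of "Suc n"] E_Suc[of n v]) (simp add: power2_eq_square field_simps)
qed

lemma theta_E: "theta c2 n t = E n (2*t+c2) / 4^n"
proof (induction n)
  case 0 then show ?case by (simp add: theta_def)
next
  case (Suc n)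
  have "theta c2 (Suc n) t = theta c2 n t * ((2*t + 1/2 + c2 + real n) * (-2*t + 1/2 - c2 + real n)) / (-4)"
    by (simp add: theta_def pochhammer_Suc field_simps)
  also have "\<dots> = E n (2*t+c2) / 4^n * (((2*t+c2)^2 - (real n + 1/2)^2) / 4)"
    by (simp add: Suc power2_eq_square field_simps) 
  finally show ?case by (simp add: E_Suc field_simps)
qed

lemma theta_0[simp]: "theta c2 0 t = 1" by (simp add: theta_def)

lemma theta_Suc: "theta c2 (Suc n) t = theta c2 n t * (mu c2 c3 t - fseq c2 c3 (int n))"
  by (simp add: theta_E E_Suc mu_def fseq_def power2_eq_square field_simps)

lemma mu_theta: "mu c2 c3 t * theta c2 n t = theta c2 (Suc n) t + fseq c2 c3 (int n) * theta c2 n t"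
  by (simp add: theta_Suc[of c2 n t c3] algebra_simps)

lemma mu_diff: "mu c2 c3 (t + 1/2) - mu c2 c3 (t - 1/2) = 2*t + c2"
  by (simp add: mu_def power2_eq_square algebra_simps)

lemma aux_div: "(u::real) \<noteq> 0 \<Longrightarrow> 4 * real (Suc m) * u * e / 4^Suc m / u = real (Suc m) * e / 4^m"
  by (simp add: field_simps)

lemma D_theta: assumes "2*t + c2 \<noteq> 0"
  shows "Dop c2 c3 (theta c2 n) t = real n * theta c2 (n - 1) t"
proof (cases n)
  case 0 then show ?thesis by (simp add: Dop_def theta_def)
next
  case (Suc m)
  have p: "2*(t+1/2)+c2 = (2*t+c2) + 1" and m: "2*(t-1/2)+c2 = (2*t+c2) - 1" by simp_all
  have "Dop c2 c3 (theta c2 n) t = (E (Suc m) ((2*t+c2) + 1) / 4^Suc m - E (Suc m) ((2*t+c2) - 1) / 4^Suc m) / (2*t+c2)"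
    unfolding Dop_def mu_diff theta_E p m Suc ..
  also have "\<dots> = real n * theta c2 (n - 1) t"
  proof -
    have d: "E (Suc m) ((2*t+c2) + 1) - E (Suc m) ((2*t+c2) - 1) = 4 * real (Suc m) * (2*t+c2) * E m (2*t+c2)"
      unfolding E_plus E_minus by (simp add: field_simps)
    have "(E (Suc m) ((2*t+c2) + 1) / 4^Suc m - E (Suc m) ((2*t+c2) - 1) / 4^Suc m) / (2*t+c2)
       = (E (Suc m) ((2*t+c2) + 1) - E (Suc m) ((2*t+c2) - 1)) / 4^Suc m / (2*t+c2)"
      by (simp add: diff_divide_distrib)
    also have "\<dots> = real (Suc m) * E m (2*t+c2) / 4^m"
      unfolding d by (rule aux_div[OF assms])
    finally show ?thesis by (simp add: Suc theta_E)
  qed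
  finally show ?thesis .
qed

lemma S_theta: "Sop (theta c2 n) t = theta c2 n t + gseq (int n) * theta c2 (n - 1) t"
proof (cases n)
  case 0 then show ?thesis by (simp add: Sop_def theta_def gseq_def)
next
  case (Suc m)
  have p: "2*(t+1/2)+c2 = (2*t+c2) + 1" and m: "2*(t-1/2)+c2 = (2*t+c2) - 1" by simp_all
  have "Sop (theta c2 n) t = (E (Suc m) ((2*t+c2) + 1) / 4^Suc m + E (Suc m) ((2*t+c2) - 1) / 4^Suc m) / 2"
    unfolding Sop_def theta_E p m Suc ..
  also have "\<dots> = theta c2 n t + gseq (int n) * theta c2 (n - 1) t"
    unfolding E_plus E_minus by (simp add: Suc theta_E E_Suc gseq_def power2_eq_square field_simps)
  finally show ?thesis .
qed

lemma Dop_sum: "Dop c2 c3 (\<lambda>s. \<Sum>j\<in>A. c j * G j s) = (\<lambda>s. \<Sum>j\<in>A. c j * Dop c2 c3 (G j) s)"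
  by (rule ext) (simp add: Dop_def sum_subtractf[symmetric] sum_divide_distrib right_diff_distrib)

lemma Sop_sum: "Sop (\<lambda>s. \<Sum>j\<in>A. c j * G j s) = (\<lambda>s. \<Sum>j\<in>A. c j * Sop (G j) s)"
  by (rule ext) (simp add: Sop_def sum.distrib[symmetric] sum_divide_distrib distrib_left)

lemma Dop_add: "Dop c2 c3 (\<lambda>s. F s + G s) = (\<lambda>s. Dop c2 c3 F s + Dop c2 c3 G s)"
  by (rule ext) (simp add: Dop_def add_divide_distrib[symmetric])

lemma Sop_add: "Sop (\<lambda>s. F s + G s) = (\<lambda>s. Sop F s + Sop G s)"
  by (rule ext) (simp add: Sop_def add_divide_distrib[symmetric])

lemma Dop_scale: "Dop c2 c3 (\<lambda>s. a * F s) = (\<lambda>s. a * Dop c2 c3 F s)"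
  by (rule ext) (simp add: Dop_def right_diff_distrib)

lemma Sop_scale: "Sop (\<lambda>s. a * F s) = (\<lambda>s. a * Sop F s)"
  by (rule ext) (simp add: Sop_def distrib_left)

lemma Dop_cong: "F (t+1/2) = G (t+1/2) \<Longrightarrow> F (t-1/2) = G (t-1/2) \<Longrightarrow> Dop c2 c3 F t = Dop c2 c3 G t"
  by (simp add: Dop_def)

lemma Sop_cong: "F (t+1/2) = G (t+1/2) \<Longrightarrow> F (t-1/2) = G (t-1/2) \<Longrightarrow> Sop F t = Sop G t"
  by (simp add: Sop_def)

definition Lf :: "real \<Rightarrow> real \<Rightarrow> real \<Rightarrow> real \<Rightarrow> real \<Rightarrow> real \<Rightarrow> real \<Rightarrow> (real \<Rightarrow> real) \<Rightarrow> real \<Rightarrow> real" where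
  "Lf c2 c3 a0 a1 a2 b0 b1 F t = (a0 * (mu c2 c3 t)^2 + a1 * mu c2 c3 t + a2) * Dop c2 c3 (Dop c2 c3 F) t
      + (b0 * mu c2 c3 t + b1) * Sop (Dop c2 c3 F) t"

lemma L_zero_iff: "L_zero c2 c3 a0 a1 a2 b0 b1 n q \<longleftrightarrow>
  (\<forall>t. 2*t + c2 \<notin> {-1, 0, 1} \<longrightarrow> Lf c2 c3 a0 a1 a2 b0 b1 (\<lambda>s. poly q (mu c2 c3 s)) t = lam a0 b0 (int n) * poly q (mu c2 c3 t))"
  unfolding L_zero_def Lf_def Let_def ..

lemma Lf_sum: "Lf c2 c3 a0 a1 a2 b0 b1 (\<lambda>s. \<Sum>j\<in>A. c j * G j s) t = (\<Sum>j\<in>A. c j * Lf c2 c3 a0 a1 a2 b0 b1 (G j) t)"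
  by (simp add: Lf_def Dop_sum Sop_sum sum.distrib[symmetric] sum_distrib_left algebra_simps)

lemma Lf_add: "Lf c2 c3 a0 a1 a2 b0 b1 (\<lambda>s. F s + G s) t = Lf c2 c3 a0 a1 a2 b0 b1 F t + Lf c2 c3 a0 a1 a2 b0 b1 G t"
  by (simp add: Lf_def Dop_add Sop_add algebra_simps)

lemma Lf_theta:
  assumes v: "2*t + c2 \<notin> {-1, 0, 1}"
  shows "Lf c2 c3 a0 a1 a2 b0 b1 (theta c2 j) t = lam a0 b0 (int j) * theta c2 j t
     + k1 c2 c3 a0 a1 b0 b1 (int j) * theta c2 (j-1) t + k2 c2 c3 a0 a1 a2 b0 b1 (int j) * theta c2 (j-2) t"
proof -
  have u0: "2*t+c2 \<noteq> 0" and up: "2*(t+1/2)+c2 \<noteq> 0" and um: "2*(t-1/2)+c2 \<noteq> 0" using v by auto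
  have DD: "Dop c2 c3 (Dop c2 c3 (theta c2 j)) t = real j * (real (j-1) * theta c2 (j-1-1) t)"
  proof -
    have "Dop c2 c3 (Dop c2 c3 (theta c2 j)) t = Dop c2 c3 (\<lambda>s. real j * theta c2 (j-1) s) t"
      by (rule Dop_cong) (simp_all add: D_theta[OF up] D_theta[OF um])
    also have "\<dots> = real j * (real (j-1) * theta c2 (j-1-1) t)"
      by (simp add: Dop_scale D_theta[OF u0])
    finally show ?thesis .
  qed
  have SD: "Sop (Dop c2 c3 (theta c2 j)) t = real j * (theta c2 (j-1) t + gseq (int (j-1)) * theta c2 (j-1-1) t)"
  proof -
    have "Sop (Dop c2 c3 (theta c2 j)) t = Sop (\<lambda>s. real j * theta c2 (j-1) s) t"
      by (rule Sop_cong) (simp_all add: D_theta[OF up] D_theta[OF um])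
    also have "\<dots> = real j * (theta c2 (j-1) t + gseq (int (j-1)) * theta c2 (j-1-1) t)"
      by (simp add: Sop_scale S_theta)
    finally show ?thesis .
  qed
  show ?thesis
  proof (cases j)
    case 0 then show ?thesis unfolding Lf_def DD SD by (simp add: lam_def k1_def k2_def)
  next
    case (Suc m) note j = this
    show ?thesis
    proof (cases m)
      case 0 then show ?thesis unfolding Lf_def DD SD
        by (simp add:  lam_def k1_def k2_def j gseq_def theta_Suc[of c2 0 t c3] algebra_simps)
    next
      case (Suc r)
      define X where "X = theta c2 (Suc (Suc r)) t"
      define Y where "Y = theta c2 (Suc r) t"
      define Z where "Z = theta c2 r t"
      define M where "M = mu c2 c3 t"
      have e1: "M * Z = Y + fseq c2 c3 (int r) * Z" unfolding M_def Y_def Z_def by (rule mu_theta)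
      have e2: "M * Y = X + fseq c2 c3 (int r + 1) * Y" unfolding M_def Y_def X_def using mu_theta[of c2 c3 t "Suc r"] by (simp add: add.commute)
      have e3: "M^2 * Z = X + (fseq c2 c3 (int r + 1) + fseq c2 c3 (int r)) * Y + (fseq c2 c3 (int r))^2 * Z"
      proof -
        have "M^2*Z = M*(M*Z)" by (simp add: power2_eq_square)
        also have "\<dots> = M*(Y + fseq c2 c3 (int r)*Z)" by (simp only: e1)
        also have "\<dots> = M*Y + fseq c2 c3 (int r)*(M*Z)" by (simp only: distrib_left mult.left_commute)
        also have "\<dots> = (X + fseq c2 c3 (int r + 1) * Y) + fseq c2 c3 (int r)*(Y + fseq c2 c3 (int r)*Z)" by (simp only: e1 e2)
        finally show ?thesis by (simp add: power2_eq_square algebra_simps)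
      qed
      have "Lf c2 c3 a0 a1 a2 b0 b1 (theta c2 j) t = (a0 * (M^2*Z) + a1 * (M*Z) + a2*Z) * (real j * real (j-1))
          + (b0 * (M*Y) + b1 * Y + gseq (int (j-1)) * (b0*(M*Z) + b1 * Z)) * real j"
        unfolding Lf_def DD SD by (simp add: j Suc Y_def Z_def M_def algebra_simps)
      also have "\<dots> = lam a0 b0 (int j) * X + k1 c2 c3 a0 a1 b0 b1 (int j) * Y + k2 c2 c3 a0 a1 a2 b0 b1 (int j) * Z"
        unfolding e1 e2 e3 by (simp add: j Suc lam_def k1_def k2_def algebra_simps)
      finally show ?thesis by (simp add: X_def Y_def Z_def j Suc)
    qed
  qed
qed

definition thz :: "real \<Rightarrow> int \<Rightarrow> real \<Rightarrow> real" where
  "thz c2 j t = (if j < 0 then 0 else theta c2 (nat j) t)"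

lemma Dop_zero: "Dop c2 c3 (\<lambda>s. 0) = (\<lambda>s. 0)" by (rule ext) (simp add: Dop_def)
lemma Sop_zero: "Sop (\<lambda>s. 0) = (\<lambda>s. 0)" by (rule ext) (simp add: Sop_def)

lemma thz_neg: "j < 0 \<Longrightarrow> thz c2 j = (\<lambda>s. 0)" by (rule ext) (simp add: thz_def)
lemma thz_nonneg: "0 \<le> j \<Longrightarrow> thz c2 j = theta c2 (nat j)" by (rule ext) (simp add: thz_def)

lemma Lf_thz:
  assumes v: "2*t + c2 \<notin> {-1, 0, 1}"
  shows "Lf c2 c3 a0 a1 a2 b0 b1 (thz c2 j) t = lam a0 b0 j * thz c2 j t
     + k1 c2 c3 a0 a1 b0 b1 j * thz c2 (j-1) t + k2 c2 c3 a0 a1 a2 b0 b1 j * thz c2 (j-2) t"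
proof (cases "j < 0")
  case True then show ?thesis by (simp add: thz_neg Lf_def Dop_zero Sop_zero thz_def)
next
  case False
  then obtain n where j: "j = int n" by (metis nonneg_int_cases not_less)
  show ?thesis
  proof (cases n)
    case 0 then show ?thesis using Lf_theta[OF v, of c3 a0 a1 a2 b0 b1 0]
      by (simp add: j thz_nonneg thz_def k1_def k2_def)
  next
    case (Suc m) note n = this
    show ?thesis
    proof (cases m)
      case 0 then show ?thesis using Lf_theta[OF v, of c3 a0 a1 a2 b0 b1 1]
        by (simp add: j n thz_nonneg thz_def k2_def gseq_def)
    next
      case (Suc r)
      have a: "nat (int n - 1) = n - 1" "nat (int n - 2) = n - 2" "nat (2 + int r) = Suc (Suc r)" "nat (1 + int r) = Suc r" using n Suc by auto
      show ?thesis using Lf_theta[OF v, of c3 a0 a1 a2 b0 b1 n] n Suc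
        by (simp add: j thz_nonneg thz_def a)
    qed
  qed
qed

lemma mu_thz: "0 \<le> j \<Longrightarrow> mu c2 c3 t * thz c2 j t = thz c2 (j+1) t + fseq c2 c3 j * thz c2 j t"
  using mu_theta[of c2 c3 t "nat j"] by (simp add: thz_def Suc_nat_eq_nat_zadd1 add.commute)

lemma sum_same_support:
  fixes g :: "int \<Rightarrow> real"
  assumes "finite A" "finite B" "\<And>j. g j \<noteq> 0 \<Longrightarrow> j \<in> A \<and> j \<in> B"
  shows "sum g A = sum g B"
proof -
  have "sum g A = sum g (A \<inter> B)"
    by (rule sum.mono_neutral_right) (use assms in auto)
  also have "\<dots> = sum g B"
    by (rule sum.mono_neutral_left) (use assms in auto)
  finally show ?thesis .
qed

lemma sum_shift:
  fixes g :: "int \<Rightarrow> real"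
  assumes "\<And>i. g i \<noteq> 0 \<Longrightarrow> a \<le> i \<and> i \<le> b \<and> a \<le> i + k \<and> i + k \<le> b"
  shows "(\<Sum>j\<in>{a..b}. g (j - k)) = (\<Sum>j\<in>{a..b}. g j)"
proof -
  have "(\<Sum>j\<in>{a..b}. g (j - k)) = (\<Sum>i\<in>(\<lambda>j. j - k) ` {a..b}. g i)"
    by (subst sum.reindex) (auto simp: inj_on_def)
  also have "(\<lambda>j. j - k) ` {a..b} = {a-k..b-k}"
    by (auto simp: image_iff intro!: bexI[where x="_ + k"])
  also have "(\<Sum>i\<in>{a-k..b-k}. g i) = (\<Sum>j\<in>{a..b}. g j)"
    by (rule sum_same_support) (use assms in force)+
  finally show ?thesis .
qed

definition Ls :: "real \<Rightarrow> real \<Rightarrow> real \<Rightarrow> real \<Rightarrow> real \<Rightarrow> real \<Rightarrow> real \<Rightarrow> (int \<Rightarrow> real) \<Rightarrow> int \<Rightarrow> real" where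
  "Ls c2 c3 a0 a1 a2 b0 b1 c i = lam a0 b0 i * c i + k1 c2 c3 a0 a1 b0 b1 (i+1) * c (i+1) + k2 c2 c3 a0 a1 a2 b0 b1 (i+2) * c (i+2)"

definition Xs :: "real \<Rightarrow> real \<Rightarrow> (int \<Rightarrow> real) \<Rightarrow> int \<Rightarrow> real" where
  "Xs c2 c3 c i = c (i - 1) + fseq c2 c3 i * c i"

definition supp_in :: "(int \<Rightarrow> real) \<Rightarrow> int \<Rightarrow> bool" where
  "supp_in c N \<longleftrightarrow> (\<forall>j. (j < 0 \<or> N < j) \<longrightarrow> c j = 0)"

lemma Lf_coords:
  assumes v: "2*t + c2 \<notin> {-1, 0, 1}" and c: "supp_in c N"
  shows "Lf c2 c3 a0 a1 a2 b0 b1 (\<lambda>s. \<Sum>j\<in>{0..N}. c j * thz c2 j s) t = (\<Sum>j\<in>{0..N}. Ls c2 c3 a0 a1 a2 b0 b1 c j * thz c2 j t)"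
proof -
  let ?k1 = "k1 c2 c3 a0 a1 b0 b1" and ?k2 = "k2 c2 c3 a0 a1 a2 b0 b1"
  have "Lf c2 c3 a0 a1 a2 b0 b1 (\<lambda>s. \<Sum>j\<in>{0..N}. c j * thz c2 j s) t
     = (\<Sum>j\<in>{0..N}. c j * (lam a0 b0 j * thz c2 j t + ?k1 j * thz c2 (j-1) t + ?k2 j * thz c2 (j-2) t))"
    by (simp add: Lf_sum Lf_thz[OF v])
  also have "\<dots> = (\<Sum>j\<in>{0..N}. c j * lam a0 b0 j * thz c2 j t) + (\<Sum>j\<in>{0..N}. c j * ?k1 j * thz c2 (j-1) t)
     + (\<Sum>j\<in>{0..N}. c j * ?k2 j * thz c2 (j-2) t)"
    by (simp add: sum.distrib algebra_simps)
  also have "(\<Sum>j\<in>{0..N}. c j * ?k1 j * thz c2 (j-1) t) = (\<Sum>j\<in>{0..N}. c (j+1) * ?k1 (j+1) * thz c2 j t)"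
  proof -
    have "(\<Sum>j\<in>{0..N}. c j * ?k1 j * thz c2 (j-1) t) = (\<Sum>j\<in>{0..N}. (\<lambda>i. c (i+1) * ?k1 (i+1) * thz c2 i t) (j - 1))"
      by simp
    also have "\<dots> = (\<Sum>j\<in>{0..N}. c (j+1) * ?k1 (j+1) * thz c2 j t)"
    proof (rule sum_shift)
      fix i assume "c (i + 1) * ?k1 (i + 1) * thz c2 i t \<noteq> 0"
      then have "c (i+1) \<noteq> 0" "\<not> i < 0" by (auto simp: thz_def)
      then show "0 \<le> i \<and> i \<le> N \<and> 0 \<le> i + 1 \<and> i + 1 \<le> N" using c unfolding supp_in_def by force
    qed
    finally show ?thesis .
  qed
  also have "(\<Sum>j\<in>{0..N}. c j * ?k2 j * thz c2 (j-2) t) = (\<Sum>j\<in>{0..N}. c (j+2) * ?k2 (j+2) * thz c2 j t)"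
  proof -
    have "(\<Sum>j\<in>{0..N}. c j * ?k2 j * thz c2 (j-2) t) = (\<Sum>j\<in>{0..N}. (\<lambda>i. c (i+2) * ?k2 (i+2) * thz c2 i t) (j - 2))"
      by simp
    also have "\<dots> = (\<Sum>j\<in>{0..N}. c (j+2) * ?k2 (j+2) * thz c2 j t)"
    proof (rule sum_shift)
      fix i assume "c (i + 2) * ?k2 (i + 2) * thz c2 i t \<noteq> 0"
      then have "c (i+2) \<noteq> 0" "\<not> i < 0" by (auto simp: thz_def)
      then show "0 \<le> i \<and> i \<le> N \<and> 0 \<le> i + 2 \<and> i + 2 \<le> N" using c unfolding supp_in_def by force
    qed
    finally show ?thesis .
  qed
  finally show ?thesis by (simp add: Ls_def sum.distrib algebra_simps)
qed

lemma mu_coords: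
  assumes c: "supp_in c N" and N: "0 \<le> N"
  shows "mu c2 c3 t * (\<Sum>j\<in>{0..N}. c j * thz c2 j t) = (\<Sum>j\<in>{0..N+1}. Xs c2 c3 c j * thz c2 j t)"
proof -
  have "mu c2 c3 t * (\<Sum>j\<in>{0..N}. c j * thz c2 j t) = (\<Sum>j\<in>{0..N}. c j * (thz c2 (j+1) t + fseq c2 c3 j * thz c2 j t))"
    by (simp add: sum_distrib_left mu_thz mult.left_commute)
  also have "\<dots> = (\<Sum>j\<in>{0..N+1}. c j * (thz c2 (j+1) t + fseq c2 c3 j * thz c2 j t))"
  proof (rule sum_same_support)
    fix j assume "c j * (thz c2 (j + 1) t + fseq c2 c3 j * thz c2 j t) \<noteq> 0"
    then have "c j \<noteq> 0" by auto
    then show "j \<in> {0..N} \<and> j \<in> {0..N+1}" using c unfolding supp_in_def by force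
  qed auto
  also have "\<dots> = (\<Sum>j\<in>{0..N+1}. c j * thz c2 (j+1) t) + (\<Sum>j\<in>{0..N+1}. fseq c2 c3 j * c j * thz c2 j t)"
    by (simp add: sum.distrib algebra_simps)
  also have "(\<Sum>j\<in>{0..N+1}. c j * thz c2 (j+1) t) = (\<Sum>j\<in>{0..N+1}. c (j - 1) * thz c2 j t)"
  proof -
    have "(\<Sum>j\<in>{0..N+1}. c j * thz c2 (j+1) t) = (\<Sum>j\<in>{0..N+1}. (\<lambda>i. c (i - 1) * thz c2 i t) (j - (-1)))"
      by simp
    also have "\<dots> = (\<Sum>j\<in>{0..N+1}. c (j - 1) * thz c2 j t)"
    proof (rule sum_shift)
      fix i assume "c (i - 1) * thz c2 i t \<noteq> 0"
      then have "c (i - 1) \<noteq> 0" by auto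
      then show "0 \<le> i \<and> i \<le> N + 1 \<and> 0 \<le> i + - 1 \<and> i + - 1 \<le> N + 1" using c unfolding supp_in_def by force
    qed
    finally show ?thesis .
  qed
  finally show ?thesis by (simp add: Xs_def sum.distrib algebra_simps)
qed


definition Tp :: "real \<Rightarrow> real \<Rightarrow> nat \<Rightarrow> real poly" where
  "Tp c2 c3 k = (\<Prod>i<k. [:- fseq c2 c3 (int i), 1:])"

lemma Tp_Suc: "Tp c2 c3 (Suc k) = Tp c2 c3 k * [:- fseq c2 c3 (int k), 1:]"
  by (simp add: Tp_def)

lemma poly_Tp: "poly (Tp c2 c3 k) (mu c2 c3 t) = theta c2 k t"
  by (induction k) (simp_all add: Tp_def theta_Suc[of c2 _ t c3] algebra_simps)

lemma Tp_deg: "degree (Tp c2 c3 k) = k \<and> coeff (Tp c2 c3 k) k = 1"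
proof (induction k)
  case 0 then show ?case by (simp add: Tp_def)
next
  case (Suc k)
  have nz: "Tp c2 c3 k \<noteq> 0" using Suc by auto
  have d: "degree (Tp c2 c3 (Suc k)) = Suc k" unfolding Tp_Suc
    using Suc nz by (subst degree_mult_eq) auto
  have "coeff (Tp c2 c3 (Suc k)) (Suc k) = lead_coeff (Tp c2 c3 k) * lead_coeff [:- fseq c2 c3 (int k), 1:]"
    using d unfolding Tp_Suc lead_coeff_mult[symmetric] by simp
  then show ?case using d Suc by simp
qed

lemma Tp_coeff_high: "k < m \<Longrightarrow> coeff (Tp c2 c3 k) m = 0"
  using Tp_deg[of c2 c3 k] by (simp add: coeff_eq_0)

lemma poly_zero_valid:
  fixes Q :: "real poly"
  assumes "\<And>t. 2*t + c2 \<notin> {-1, 0, 1} \<Longrightarrow> poly Q (mu c2 c3 t) = 0"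
  shows "Q = 0"
proof (rule ccontr)
  assume "Q \<noteq> 0"
  then have fin: "finite {x. poly Q x = 0}" by (rule poly_roots_finite)
  define r where "r = \<bar>c2\<bar> + 2"
  define h where "h n = mu c2 c3 (r + real n)" for n :: nat
  have "inj h"
  proof (rule injI)
    fix n m assume "h n = h m"
    then have "(real n - real m) * (2*r + real n + real m + c2) = 0"
      unfolding h_def mu_def by (simp add: algebra_simps power2_eq_square)
    moreover have "2*r + real n + real m + c2 > 0" unfolding r_def by (simp add: abs_if) 
    ultimately show "n = m" by simp
  qed
  moreover have "range h \<subseteq> {x. poly Q x = 0}"
  proof
    fix x assume "x \<in> range h"
    then obtain n where x: "x = h n" by auto
    have "2*(r + real n) + c2 \<notin> {-1, 0, 1}" unfolding r_def by (auto simp: abs_if)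
    then show "x \<in> {x. poly Q x = 0}" using assms x h_def by auto
  qed
  ultimately have "finite (UNIV :: nat set)"
    using fin by (metis finite_imageD finite_subset inj_on_subset subset_UNIV)
  then show False by simp
qed

lemma sum_int_nat: "(\<Sum>j\<in>{0..int n}. G j) = (\<Sum>k\<le>n. G (int k))"
proof -
  have "{0..int n} = int ` {..n}" by (auto simp: image_iff intro!: bexI[where x="nat _"])
  then show ?thesis by (simp add: sum.reindex)
qed

lemma coeff_top:
  "coeff (\<Sum>j\<in>{0..int n}. smult (d j) (Tp c2 c3 (nat j))) n = d (int n)"
proof -
  have "coeff (\<Sum>j\<in>{0..int n}. smult (d j) (Tp c2 c3 (nat j))) n = (\<Sum>k\<le>n. d (int k) * coeff (Tp c2 c3 k) n)"
    by (simp add: coeff_sum sum_int_nat)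
  also have "\<dots> = d (int n) * coeff (Tp c2 c3 n) n + (\<Sum>k\<in>{..n}-{n}. d (int k) * coeff (Tp c2 c3 k) n)"
    by (subst sum.remove[of _ n]) auto
  also have "(\<Sum>k\<in>{..n}-{n}. d (int k) * coeff (Tp c2 c3 k) n) = 0"
    by (rule sum.neutral) (auto simp: Tp_coeff_high)
  finally show ?thesis using Tp_deg[of c2 c3 n] by simp
qed

lemma lin_indep:
  "(\<Sum>j\<in>{0..int n}. smult (d j) (Tp c2 c3 (nat j))) = 0 \<Longrightarrow> \<forall>j\<in>{0..int n}. d j = 0"
proof (induction n)
  case 0
  then show ?case using coeff_top[of d c2 c3 0] by (simp add: Tp_def)
next
  case (Suc n)
  have dn: "d (int (Suc n)) = 0" using coeff_top[of d c2 c3 "Suc n"] Suc.prems by simp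
  have "{0..int (Suc n)} = insert (int (Suc n)) {0..int n}" by auto
  then have "(\<Sum>j\<in>{0..int n}. smult (d j) (Tp c2 c3 (nat j))) = 0"
    using Suc.prems dn by simp
  then have "\<forall>j\<in>{0..int n}. d j = 0" by (rule Suc.IH)
  then show ?case using dn by (metis atLeastAtMost_iff insertE \<open>{0..int (Suc n)} = insert (int (Suc n)) {0..int n}\<close>)
qed

lemma sum_thz_poly:
  "(\<Sum>j\<in>{0..N}. d j * thz c2 j t) = poly (\<Sum>j\<in>{0..N}. smult (d j) (Tp c2 c3 (nat j))) (mu c2 c3 t)"
  by (simp add: poly_sum poly_Tp thz_def)

lemma coords_unique:
  assumes "\<And>t. 2*t + c2 \<notin> {-1, 0, 1} \<Longrightarrow> (\<Sum>j\<in>{0..int n}. d j * thz c2 j t) = 0"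
  shows "\<forall>j\<in>{0..int n}. d j = 0"
proof -
  have "(\<Sum>j\<in>{0..int n}. smult (d j) (Tp c2 c3 (nat j))) = 0"
    by (rule poly_zero_valid[of c2 _ c3]) (use assms sum_thz_poly[where d=d and N="int n" and ?c2.0=c2 and ?c3.0=c3] in auto)
  then show ?thesis by (rule lin_indep)
qed


lemma k1_0[simp]: "k1 c2 c3 a0 a1 b0 b1 0 = 0" by (simp add: k1_def)
lemma k2_0[simp]: "k2 c2 c3 a0 a1 a2 b0 b1 0 = 0" by (simp add: k2_def)
lemma k2_1[simp]: "k2 c2 c3 a0 a1 a2 b0 b1 1 = 0" by (simp add: k2_def gseq_def)

lemma Ls_supp:
  assumes "supp_in y M" shows "supp_in (Ls c2 c3 a0 a1 a2 b0 b1 y) M"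
  unfolding supp_in_def
proof (intro allI impI)
  fix j assume j: "j < 0 \<or> M < j"
  show "Ls c2 c3 a0 a1 a2 b0 b1 y j = 0"
  proof (cases "M < j")
    case True then show ?thesis using assms unfolding supp_in_def Ls_def by auto
  next
    case False
    then have "j < 0" using j by auto
    then have "j = -1 \<or> j = -2 \<or> j < -2" by auto
    then show ?thesis using assms unfolding supp_in_def Ls_def by auto
  qed
qed

lemma Xs_supp:
  assumes "supp_in y M" shows "supp_in (Xs c2 c3 y) (M+1)"
  using assms unfolding supp_in_def Xs_def by auto

lemma supp_mono: "supp_in y M \<Longrightarrow> M \<le> M' \<Longrightarrow> supp_in y M'"
  unfolding supp_in_def by auto

lemma Ls_lin: "Ls c2 c3 a0 a1 a2 b0 b1 (\<lambda>i. a * x i + b * y i) j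
   = a * Ls c2 c3 a0 a1 a2 b0 b1 x j + b * Ls c2 c3 a0 a1 a2 b0 b1 y j"
  unfolding Ls_def by (simp add: algebra_simps)

lemma Xs_lin: "Xs c2 c3 (\<lambda>i. a * x i + b * y i) j = a * Xs c2 c3 x j + b * Xs c2 c3 y j"
  unfolding Xs_def by (simp add: algebra_simps)

lemma kernel:
  assumes eig: "\<And>i. Ls c2 c3 a0 a1 a2 b0 b1 y i = lm * y i"
    and top: "\<And>i. M < i \<Longrightarrow> y i = 0"
    and ne: "\<And>i. K < i \<Longrightarrow> i \<le> M \<Longrightarrow> lam a0 b0 i \<noteq> lm"
  shows "K < i \<Longrightarrow> y i = 0"
proof -
  have claim: "\<forall>j. max K (M - int n) < j \<longrightarrow> y j = 0" for n :: nat
  proof (induction n)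
    case 0 then show ?case using top by auto
  next
    case (Suc n)
    show ?case
    proof (intro allI impI)
      fix j assume j: "max K (M - int (Suc n)) < j"
      show "y j = 0"
      proof (cases "max K (M - int n) < j")
        case True then show ?thesis using Suc.IH by auto
      next
        case False
        then have jj: "j = M - int n" "K < j" using j by auto
        have "y (j+1) = 0" "y (j+2) = 0" using Suc.IH jj by auto
        then have "lam a0 b0 j * y j = lm * y j" using eig[of j] unfolding Ls_def by simp
        moreover have "lam a0 b0 j \<noteq> lm" using ne jj by auto
        ultimately show ?thesis by simp
      qed
    qed
  qed
  assume Ki: "K < i"
  show "y i = 0"
  proof (cases "M < i")
    case True then show ?thesis using top by auto
  next
    case False
    then have "max K (M - int (nat (M - K))) < i" using Ki by auto
    then show ?thesis using claim by blast
  qed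
qed


lemma band_0:
  fixes c2 c3 a0 a1 a2 b0 b1 :: real and i :: int
  shows "(-2) * a0 * lam a0 b0 (i - 1) + (-2) * a0 * lam a0 b0 i + (-1) * ((b0-a0)^2 - a0^2) + (1) * lam a0 b0 (i - 1) * lam a0 b0 (i - 1) + (-2) * lam a0 b0 (i - 1) * lam a0 b0 i + (1) * lam a0 b0 i * lam a0 b0 i = 0"
proof -
  define k where "k = c3 - c2^2/4"
  define h :: real where "h = 1/16"
  have h16: "16*h = 1" unfolding h_def by simp
  have F: "\<And>j. fseq c2 c3 j = k + (2*of_int j+1)^2*h" unfolding fseq_def k_def h_def by (simp add: algebra_simps)
  have G: "\<And>j. gseq j = of_int j*(2*of_int j-1)*(4*h)" unfolding gseq_def h_def by simp
  show ?thesis unfolding lam_def k1_def k2_def F G of_int_add of_int_diff of_int_1 of_int_numeral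
    by (simp add: algebra_simps power2_eq_square)
qed


lemma band_1:
  fixes c2 c3 a0 a1 a2 b0 b1 :: real and i :: int
  shows "(-2) * k1 c2 c3 a0 a1 b0 b1 i * a0 + (1) * k1 c2 c3 a0 a1 b0 b1 i * lam a0 b0 (i - 1) + (-1) * k1 c2 c3 a0 a1 b0 b1 i * lam a0 b0 i + (-2) * k1 c2 c3 a0 a1 b0 b1 (i + 1) * a0 + (-1) * k1 c2 c3 a0 a1 b0 b1 (i + 1) * lam a0 b0 i + (1) * k1 c2 c3 a0 a1 b0 b1 (i + 1) * lam a0 b0 (i + 1) + (-4) * a0 * fseq c2 c3 i * lam a0 b0 i + (-1) * ((b0-a0)^2 - a0^2) * fseq c2 c3 i + (-1) * (2*a1 - b0) * lam a0 b0 i + (-1) * (b1*(b0 - 2*a0)) + (-2) * lam a0 b0 i * lam a0 b0 i = 0"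
proof -
  define k where "k = c3 - c2^2/4"
  define h :: real where "h = 1/16"
  have h16: "16*h = 1" unfolding h_def by simp
  have F: "\<And>j. fseq c2 c3 j = k + (2*of_int j+1)^2*h" unfolding fseq_def k_def h_def by (simp add: algebra_simps)
  have G: "\<And>j. gseq j = of_int j*(2*of_int j-1)*(4*h)" unfolding gseq_def h_def by simp
  show ?thesis unfolding lam_def k1_def k2_def F G of_int_add of_int_diff of_int_1 of_int_numeral
    using h16 by algebra
qed


lemma band_2:
  fixes c2 c3 a0 a1 a2 b0 b1 :: real and i :: int
  shows "(1) * k1 c2 c3 a0 a1 b0 b1 i * k1 c2 c3 a0 a1 b0 b1 (i + 1) + (-2) * k1 c2 c3 a0 a1 b0 b1 (i + 1) * k1 c2 c3 a0 a1 b0 b1 (i + 1) + (1) * k1 c2 c3 a0 a1 b0 b1 (i + 1) * k1 c2 c3 a0 a1 b0 b1 (i + 2) + (-2) * k1 c2 c3 a0 a1 b0 b1 (i + 1) * a0 * fseq c2 c3 i + (-2) * k1 c2 c3 a0 a1 b0 b1 (i + 1) * a0 * fseq c2 c3 (i + 1) + (-1) * k1 c2 c3 a0 a1 b0 b1 (i + 1) * (2*a1 - b0) + (-1) * k1 c2 c3 a0 a1 b0 b1 (i + 1) * fseq c2 c3 i * lam a0 b0 i + (1) * k1 c2 c3 a0 a1 b0 b1 (i + 1) * fseq c2 c3 i * lam a0 b0 (i + 1) + (1) * k1 c2 c3 a0 a1 b0 b1 (i + 1) * fseq c2 c3 (i + 1) * lam a0 b0 i + (-1) * k1 c2 c3 a0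 a1 b0 b1 (i + 1) * fseq c2 c3 (i + 1) * lam a0 b0 (i + 1) + (-2) * k1 c2 c3 a0 a1 b0 b1 (i + 1) * lam a0 b0 i + (-2) * k1 c2 c3 a0 a1 b0 b1 (i + 1) * lam a0 b0 (i + 1) + (-2) * k2 c2 c3 a0 a1 a2 b0 b1 (i + 1) * a0 + (1) * k2 c2 c3 a0 a1 a2 b0 b1 (i + 1) * lam a0 b0 (i - 1) + (-2) * k2 c2 c3 a0 a1 a2 b0 b1 (i + 1) * lam a0 b0 i + (1) * k2 c2 c3 a0 a1 a2 b0 b1 (i + 1) * lam a0 b0 (i + 1) + (-2) * k2 c2 c3 a0 a1 a2 b0 b1 (i + 2) * a0 + (1) * k2 c2 c3 a0 a1 a2 b0 b1 (i + 2) * lam a0 b0 i + (-2) * k2 c2 c3 a0 a1 a2 b0 b1 (i + 2) * lam a0 b0 (i + 1) + (1) * k2 c2 c3 a0 a1 a2 b0 b1 (i + 2) * lam a0 b0 (i + 2) = 0"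
proof -
  define k where "k = c3 - c2^2/4"
  define h :: real where "h = 1/16"
  have h16: "16*h = 1" unfolding h_def by simp
  have F: "\<And>j. fseq c2 c3 j = k + (2*of_int j+1)^2*h" unfolding fseq_def k_def h_def by (simp add: algebra_simps)
  have G: "\<And>j. gseq j = of_int j*(2*of_int j-1)*(4*h)" unfolding gseq_def h_def by simp
  show ?thesis unfolding lam_def k1_def k2_def F G of_int_add of_int_diff of_int_1 of_int_numeral
    using h16 by algebra
qed


lemma band_3:
  fixes c2 c3 a0 a1 a2 b0 b1 :: real and i :: int
  shows "(1) * k1 c2 c3 a0 a1 b0 b1 i * k2 c2 c3 a0 a1 a2 b0 b1 (i + 2) + (-2) * k1 c2 c3 a0 a1 b0 b1 (i + 1) * k1 c2 c3 a0 a1 b0 b1 (i + 2) + (1) * k1 c2 c3 a0 a1 b0 b1 (i + 1) * k1 c2 c3 a0 a1 b0 b1 (i + 2) * fseq c2 c3 i + (-2) * k1 c2 c3 a0 a1 b0 b1 (i + 1) * k1 c2 c3 a0 a1 b0 b1 (i + 2) * fseq c2 c3 (i + 1) + (1) * k1 c2 c3 a0 a1 b0 b1 (i + 1) * k1 c2 c3 a0 a1 b0 b1 (i + 2) * fseq c2 c3 (i + 2) + (-2) * k1 c2 c3 a0 a1 b0 b1 (i + 1) * k2 c2 c3 a0 a1 a2 b0 b1 (i + 2) + (1) * k1 c2 c3 a0 a1 b0 b1 (i + 1) * k2 c2 c3 a0 a1 a2 b0 b1 (i + 3) + (1) * k1 c2 c3 a0 a1 b0 b1 (i + 2) * k2 c2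 c3 a0 a1 a2 b0 b1 (i + 1) + (-2) * k1 c2 c3 a0 a1 b0 b1 (i + 2) * k2 c2 c3 a0 a1 a2 b0 b1 (i + 2) + (1) * k1 c2 c3 a0 a1 b0 b1 (i + 3) * k2 c2 c3 a0 a1 a2 b0 b1 (i + 2) + (-2) * k2 c2 c3 a0 a1 a2 b0 b1 (i + 2) * a0 * fseq c2 c3 i + (-2) * k2 c2 c3 a0 a1 a2 b0 b1 (i + 2) * a0 * fseq c2 c3 (i + 2) + (-1) * k2 c2 c3 a0 a1 a2 b0 b1 (i + 2) * (2*a1 - b0) + (-1) * k2 c2 c3 a0 a1 a2 b0 b1 (i + 2) * fseq c2 c3 i * lam a0 b0 i + (1) * k2 c2 c3 a0 a1 a2 b0 b1 (i + 2) * fseq c2 c3 i * lam a0 b0 (i + 2) + (1) * k2 c2 c3 a0 a1 a2 b0 b1 (i + 2) * fseq c2 c3 (i + 2) * lam a0 b0 i + (-1) * k2 c2 c3 a0 a1 a2 b0 b1 (i + 2) * fseq c2 c3 (i + 2) * lam a0 b0 (i + 2) + (-2) * k2 c2 c3 a0 a1 a2 b0 b1 (i + 2) * lam a0 b0 i + (-2) * k2 c2 c3 a0 a1 a2 b0 b1 (i + 2) * lam a0 b0 (i + 2) = 0"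
proof -
  define k where "k = c3 - c2^2/4"
  define h :: real where "h = 1/16"
  have h16: "16*h = 1" unfolding h_def by simp
  have F: "\<And>j. fseq c2 c3 j = k + (2*of_int j+1)^2*h" unfolding fseq_def k_def h_def by (simp add: algebra_simps)
  have G: "\<And>j. gseq j = of_int j*(2*of_int j-1)*(4*h)" unfolding gseq_def h_def by simp
  show ?thesis unfolding lam_def k1_def k2_def F G of_int_add of_int_diff of_int_1 of_int_numeral
    using h16 by algebra
qed


lemma band_4:
  fixes c2 c3 a0 a1 a2 b0 b1 :: real and i :: int
  shows "(-2) * k1 c2 c3 a0 a1 b0 b1 (i + 1) * k2 c2 c3 a0 a1 a2 b0 b1 (i + 3) + (1) * k1 c2 c3 a0 a1 b0 b1 (i + 1) * k2 c2 c3 a0 a1 a2 b0 b1 (i + 3) * fseq c2 c3 i + (-2) * k1 c2 c3 a0 a1 b0 b1 (i + 1) * k2 c2 c3 a0 a1 a2 b0 b1 (i + 3) * fseq c2 c3 (i + 1) + (1) * k1 c2 c3 a0 a1 b0 b1 (i + 1) * k2 c2 c3 a0 a1 a2 b0 b1 (i + 3) * fseq c2 c3 (i + 3) + (-2) * k1 c2 c3 a0 a1 b0 b1 (i + 3) * k2 c2 c3 a0 a1 a2 b0 b1 (i + 2) + (1) * k1 c2 c3 a0 a1 b0 b1 (i + 3) * k2 c2 c3 a0 a1 a2 b0 b1 (i + 2) * fseq c2 c3 i + (-2) * k1 c2 c3 a0 a1 b0 b1 (i + 3) * k2 c2 c3 a0 a1 a2 b0 b1 (i + 2) * fseq c2 c3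 (i + 2) + (1) * k1 c2 c3 a0 a1 b0 b1 (i + 3) * k2 c2 c3 a0 a1 a2 b0 b1 (i + 2) * fseq c2 c3 (i + 3) + (1) * k2 c2 c3 a0 a1 a2 b0 b1 (i + 1) * k2 c2 c3 a0 a1 a2 b0 b1 (i + 3) + (-2) * k2 c2 c3 a0 a1 a2 b0 b1 (i + 2) * k2 c2 c3 a0 a1 a2 b0 b1 (i + 3) + (1) * k2 c2 c3 a0 a1 a2 b0 b1 (i + 2) * k2 c2 c3 a0 a1 a2 b0 b1 (i + 4) = 0"
proof -
  define k where "k = c3 - c2^2/4"
  define h :: real where "h = 1/16"
  have h16: "16*h = 1" unfolding h_def by simp
  have F: "\<And>j. fseq c2 c3 j = k + (2*of_int j+1)^2*h" unfolding fseq_def k_def h_def by (simp add: algebra_simps)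
  have G: "\<And>j. gseq j = of_int j*(2*of_int j-1)*(4*h)" unfolding gseq_def h_def by simp
  show ?thesis unfolding lam_def k1_def k2_def F G of_int_add of_int_diff of_int_1 of_int_numeral
    using h16 by algebra
qed


lemma band_5:
  fixes c2 c3 a0 a1 a2 b0 b1 :: real and i :: int
  shows "(-2) * k2 c2 c3 a0 a1 a2 b0 b1 (i + 2) * k2 c2 c3 a0 a1 a2 b0 b1 (i + 4) + (1) * k2 c2 c3 a0 a1 a2 b0 b1 (i + 2) * k2 c2 c3 a0 a1 a2 b0 b1 (i + 4) * fseq c2 c3 i + (-2) * k2 c2 c3 a0 a1 a2 b0 b1 (i + 2) * k2 c2 c3 a0 a1 a2 b0 b1 (i + 4) * fseq c2 c3 (i + 2) + (1) * k2 c2 c3 a0 a1 a2 b0 b1 (i + 2) * k2 c2 c3 a0 a1 a2 b0 b1 (i + 4) * fseq c2 c3 (i + 4) = 0"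
proof -
  define k where "k = c3 - c2^2/4"
  define h :: real where "h = 1/16"
  have h16: "16*h = 1" unfolding h_def by simp
  have F: "\<And>j. fseq c2 c3 j = k + (2*of_int j+1)^2*h" unfolding fseq_def k_def h_def by (simp add: algebra_simps)
  have G: "\<And>j. gseq j = of_int j*(2*of_int j-1)*(4*h)" unfolding gseq_def h_def by simp
  show ?thesis unfolding lam_def k1_def k2_def F G of_int_add of_int_diff of_int_1 of_int_numeral
    using h16 by algebra
qed



lemma AW_generic:
  fixes lm K Q F c :: "int \<Rightarrow> real" and a0 e2 e3 e4 :: real
  shows "(\<lambda>c i. lm i * c i + K (i+1) * c (i+1) + Q (i+2) * c (i+2)) ((\<lambda>c i. lm i * c i + K (i+1) * c (i+1) + Q (i+2) * c (i+2)) ((\<lambda>c i. c (i - 1) + F i * c i) c)) i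
     - 2 * (\<lambda>c i. lm i * c i + K (i+1) * c (i+1) + Q (i+2) * c (i+2)) ((\<lambda>c i. c (i - 1) + F i * c i) ((\<lambda>c i. lm i * c i + K (i+1) * c (i+1) + Q (i+2) * c (i+2)) c)) i
     + (\<lambda>c i. c (i - 1) + F i * c i) ((\<lambda>c i. lm i * c i + K (i+1) * c (i+1) + Q (i+2) * c (i+2)) ((\<lambda>c i. lm i * c i + K (i+1) * c (i+1) + Q (i+2) * c (i+2)) c)) i
     - 2*a0 * ((\<lambda>c i. lm i * c i + K (i+1) * c (i+1) + Q (i+2) * c (i+2)) ((\<lambda>c i. c (i - 1) + F i * c i) c) i + (\<lambda>c i. c (i - 1) + F i * c i) ((\<lambda>c i. lm i * c i + K (i+1) * c (i+1) + Q (i+2) * c (i+2)) c) i)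
     - e2 * (\<lambda>c i. c (i - 1) + F i * c i) c i - 2 * (\<lambda>c i. lm i * c i + K (i+1) * c (i+1) + Q (i+2) * c (i+2)) ((\<lambda>c i. lm i * c i + K (i+1) * c (i+1) + Q (i+2) * c (i+2)) c) i
     - e3 * (\<lambda>c i. lm i * c i + K (i+1) * c (i+1) + Q (i+2) * c (i+2)) c i - e4 * c i =
   ((-2) * a0 * lm (i - 1) + (-2) * a0 * lm i + (-1) * e2 + (1) * lm (i - 1) * lm (i - 1) + (-2) * lm (i - 1) * lm i + (1) * lm i * lm i) * c (i - 1)
   + ((-2) * K i * a0 + (1) * K i * lm (i - 1) + (-1) * K i * lm i + (-2) * K (i + 1) * a0 + (-1) * K (i + 1) * lm i + (1) * K (i + 1) * lm (i + 1) + (-4) * a0 * F i * lm i + (-1) * e2 * F i + (-1) * e3 * lm i + (-1) * e4 + (-2) * lm i * lm i) * c i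
   + ((1) * K i * K (i + 1) + (-2) * K (i + 1) * K (i + 1) + (1) * K (i + 1) * K (i + 2) + (-2) * K (i + 1) * a0 * F i + (-2) * K (i + 1) * a0 * F (i + 1) + (-1) * K (i + 1) * e3 + (-1) * K (i + 1) * F i * lm i + (1) * K (i + 1) * F i * lm (i + 1) + (1) * K (i + 1) * F (i + 1) * lm i + (-1) * K (i + 1) * F (i + 1) * lm (i + 1) + (-2) * K (i + 1) * lm i + (-2) * K (i + 1) * lm (i + 1) + (-2) * Q (i + 1) * a0 + (1) * Q (i + 1) * lm (i - 1) + (-2) * Q (i + 1) * lm i + (1) * Q (i + 1) * lm (i + 1) + (-2) * Q (i + 2) * a0 + (1) * Q (i + 2) * lm i + (-2) * Q (i + 2) * lm (i + 1) + (1) * Q (i + 2) * lm (i + 2)) * c (i + 1)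
   + ((1) * K i * Q (i + 2) + (-2) * K (i + 1) * K (i + 2) + (1) * K (i + 1) * K (i + 2) * F i + (-2) * K (i + 1) * K (i + 2) * F (i + 1) + (1) * K (i + 1) * K (i + 2) * F (i + 2) + (-2) * K (i + 1) * Q (i + 2) + (1) * K (i + 1) * Q (i + 3) + (1) * K (i + 2) * Q (i + 1) + (-2) * K (i + 2) * Q (i + 2) + (1) * K (i + 3) * Q (i + 2) + (-2) * Q (i + 2) * a0 * F i + (-2) * Q (i + 2) * a0 * F (i + 2) + (-1) * Q (i + 2) * e3 + (-1) * Q (i + 2) * F i * lm i + (1) * Q (i + 2) * F i * lm (i + 2) + (1) * Q (i + 2) * F (i + 2) * lm i + (-1) * Q (i + 2) * F (i + 2) * lm (i + 2) + (-2) * Q (i + 2) * lm i + (-2) * Q (i + 2) * lm (i + 2)) * c (i + 2)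
   + ((-2) * K (i + 1) * Q (i + 3) + (1) * K (i + 1) * Q (i + 3) * F i + (-2) * K (i + 1) * Q (i + 3) * F (i + 1) + (1) * K (i + 1) * Q (i + 3) * F (i + 3) + (-2) * K (i + 3) * Q (i + 2) + (1) * K (i + 3) * Q (i + 2) * F i + (-2) * K (i + 3) * Q (i + 2) * F (i + 2) + (1) * K (i + 3) * Q (i + 2) * F (i + 3) + (1) * Q (i + 1) * Q (i + 3) + (-2) * Q (i + 2) * Q (i + 3) + (1) * Q (i + 2) * Q (i + 4)) * c (i + 3)
   + ((-2) * Q (i + 2) * Q (i + 4) + (1) * Q (i + 2) * Q (i + 4) * F i + (-2) * Q (i + 2) * Q (i + 4) * F (i + 2) + (1) * Q (i + 2) * Q (i + 4) * F (i + 4)) * c (i + 4)"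
  by (simp add: algebra_simps)


lemma Ls_eq: "Ls c2 c3 a0 a1 a2 b0 b1 = (\<lambda>c i. lam a0 b0 i * c i + k1 c2 c3 a0 a1 b0 b1 (i+1) * c (i+1) + k2 c2 c3 a0 a1 a2 b0 b1 (i+2) * c (i+2))"
  by (intro ext) (simp add: Ls_def)

lemma Xs_eq: "Xs c2 c3 = (\<lambda>c i. c (i - 1) + fseq c2 c3 i * c i)"
  by (intro ext) (simp add: Xs_def)

lemma AW_conc:
  fixes c :: "int \<Rightarrow> real" and c2 c3 a0 a1 a2 b0 b1 :: real
  shows "Ls c2 c3 a0 a1 a2 b0 b1 (Ls c2 c3 a0 a1 a2 b0 b1 (Xs c2 c3 c)) i - 2 * Ls c2 c3 a0 a1 a2 b0 b1 (Xs c2 c3 (Ls c2 c3 a0 a1 a2 b0 b1 c)) i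
     + Xs c2 c3 (Ls c2 c3 a0 a1 a2 b0 b1 (Ls c2 c3 a0 a1 a2 b0 b1 c)) i
     - 2*a0 * (Ls c2 c3 a0 a1 a2 b0 b1 (Xs c2 c3 c) i + Xs c2 c3 (Ls c2 c3 a0 a1 a2 b0 b1 c) i)
     - ((b0-a0)^2 - a0^2) * Xs c2 c3 c i - 2 * Ls c2 c3 a0 a1 a2 b0 b1 (Ls c2 c3 a0 a1 a2 b0 b1 c) i
     - (2*a1 - b0) * Ls c2 c3 a0 a1 a2 b0 b1 c i - (b1*(b0 - 2*a0)) * c i = 0"
  unfolding Ls_eq Xs_eq
  unfolding AW_generic[where lm="lam a0 b0" and ?a0.0=a0 and K="k1 c2 c3 a0 a1 b0 b1" and Q="k2 c2 c3 a0 a1 a2 b0 b1" and F="fseq c2 c3"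
     and ?e2.0="(b0-a0)^2 - a0^2" and ?e3.0="2*a1 - b0" and ?e4.0="b1*(b0 - 2*a0)"]
  unfolding band_0 band_1 band_2 band_3 band_4 band_5 by simp


lemma sum_extend:
  assumes "supp_in c N" "N \<le> M"
  shows "(\<Sum>j\<in>{0..N}. c j * g j) = (\<Sum>j\<in>{0..M}. c j * (g j :: real))"
proof (rule sum_same_support)
  fix j assume "c j * g j \<noteq> 0"
  then have "c j \<noteq> 0" by auto
  then show "j \<in> {0..N} \<and> j \<in> {0..M}" using assms unfolding supp_in_def by force
qed auto

lemma translate:
  fixes P1 P0 Q :: "real poly" and c cp d :: "int \<Rightarrow> real"
  assumes r1: "\<And>t. poly P1 (mu c2 c3 t) = (\<Sum>j\<in>{0..N+1}. cp j * thz c2 j t)"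
    and r0: "\<And>t. poly P0 (mu c2 c3 t) = (\<Sum>j\<in>{0..N}. c j * thz c2 j t)"
    and rq: "\<And>t. poly Q (mu c2 c3 t) = (\<Sum>j\<in>{0..N+1}. d j * thz c2 j t)"
    and sc: "supp_in c N" and N: "0 \<le> N"
    and X: "\<And>i. Xs c2 c3 c i = cp i + \<alpha> * c i + B * d i"
  shows "P1 = [:- \<alpha>, 1:] * P0 - smult B Q"
proof -
  have "P1 - ([:- \<alpha>, 1:] * P0 - smult B Q) = 0"
  proof (rule poly_zero_valid[of c2 _ c3])
    fix t
    have m: "mu c2 c3 t * (\<Sum>j\<in>{0..N}. c j * thz c2 j t) = (\<Sum>j\<in>{0..N+1}. (cp j + \<alpha> * c j + B * d j) * thz c2 j t)"
      using mu_coords[OF sc N, where ?c2.0=c2 and ?c3.0=c3 and t=t] X by simp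
    have e: "(\<Sum>j\<in>{0..N}. c j * thz c2 j t) = (\<Sum>j\<in>{0..N+1}. c j * thz c2 j t)"
      by (rule sum_extend[OF sc]) simp
    have "poly (P1 - ([:- \<alpha>, 1:] * P0 - smult B Q)) (mu c2 c3 t)
       = poly P1 (mu c2 c3 t) - (mu c2 c3 t * poly P0 (mu c2 c3 t) - \<alpha> * poly P0 (mu c2 c3 t)) + B * poly Q (mu c2 c3 t)"
      by (simp add: algebra_simps)
    also have "\<dots> = (\<Sum>j\<in>{0..N+1}. cp j * thz c2 j t) - ((\<Sum>j\<in>{0..N+1}. (cp j + \<alpha> * c j + B * d j) * thz c2 j t)
        - \<alpha> * (\<Sum>j\<in>{0..N}. c j * thz c2 j t)) + B * (\<Sum>j\<in>{0..N+1}. d j * thz c2 j t)"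
      unfolding r1 r0 rq m ..
    also have "\<dots> = 0"
      unfolding e by (simp add: sum_distrib_left sum.distrib algebra_simps sum_subtractf[symmetric])
    finally show "poly (P1 - ([:- \<alpha>, 1:] * P0 - smult B Q)) (mu c2 c3 t) = 0" .
  qed
  then show ?thesis by simp
qed

lemma Ls_sub: "Ls c2 c3 a0 a1 a2 b0 b1 (\<lambda>i. x i - a * y i) j = Ls c2 c3 a0 a1 a2 b0 b1 x j - a * Ls c2 c3 a0 a1 a2 b0 b1 y j"
  unfolding Ls_def by (simp add: algebra_simps)

lemma coord_rec:
  fixes cm c cp :: "int \<Rightarrow> real" and n :: int and c2 c3 a0 a1 a2 b0 b1 :: real
  defines "L \<equiv> Ls c2 c3 a0 a1 a2 b0 b1" and "X \<equiv> Xs c2 c3"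
  assumes em: "\<And>i. L cm i = lam a0 b0 (n-1) * cm i"
    and e0: "\<And>i. L c i = lam a0 b0 n * c i"
    and ep: "\<And>i. L cp i = lam a0 b0 (n+1) * cp i"
    and sm: "supp_in cm (n-1)" and s0: "supp_in c n" and sp: "supp_in cp (n+1)"
    and tm: "cm (n-1) = 1" and tp: "cp (n+1) = 1"
    and n1: "1 \<le> n"
    and dist: "\<And>a b. 0 \<le> a \<Longrightarrow> a < b \<Longrightarrow> lam a0 b0 a \<noteq> lam a0 b0 b"
  shows "\<exists>\<alpha> A B. \<forall>i. X c i = A * cp i + \<alpha> * c i + B * cm i"
proof -
  define lm where "lm = lam a0 b0 n"
  define lp where "lp = lam a0 b0 (n+1)"
  define lq where "lq = lam a0 b0 (n-1)"
  define v where "v = X c"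
  have Lc: "L c = (\<lambda>i. lm * c i)" using e0 lm_def by auto
  have XLc: "X (L c) = (\<lambda>i. lm * v i)" unfolding Lc v_def X_def Xs_def by (auto simp: algebra_simps)
  have Lsc: "L (\<lambda>i. lm * c i) = (\<lambda>i. lm * L c i)" by (rule ext) (simp add: L_def Ls_def algebra_simps)
  have LLc: "L (L c) = (\<lambda>i. lm * (lm * c i))" unfolding Lc Lsc by (simp add: Lc)
  have LXLc: "L (X (L c)) i = lm * L v i" for i unfolding XLc unfolding L_def Ls_def by (simp add: algebra_simps)
  have XLLc: "X (L (L c)) i = lm * (lm * v i)" for i unfolding LLc v_def X_def Xs_def by (simp add: algebra_simps)
  have sum_l: "lp + lq = 2*lm + 2*a0" unfolding lp_def lq_def lm_def lam_def by (simp add: algebra_simps)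
  have prod_l: "lp * lq = lm^2 - 2*a0*lm - ((b0-a0)^2 - a0^2)" unfolding lp_def lq_def lm_def lam_def
    by (simp add: algebra_simps power2_eq_square)
  define Kc where "Kc = 2*lm^2 + (2*a1 - b0)*lm + b1*(b0 - 2*a0)"
  have AWv: "L (L v) i - (lp + lq) * L v i + lp*lq * v i = Kc * c i" for i
  proof -
    have "L (L v) i - 2 * L (X (L c)) i + X (L (L c)) i - 2*a0 * (L v i + X (L c) i)
     - ((b0-a0)^2 - a0^2) * v i - 2 * L (L c) i - (2*a1 - b0) * L c i - (b1*(b0 - 2*a0)) * c i = 0"
      using AW_conc[of c2 c3 a0 a1 a2 b0 b1 c i] unfolding L_def X_def v_def by simp
    then have "L (L v) i - 2 * (lm * L v i) + lm * (lm * v i) - 2*a0 * (L v i + lm * v i)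
     - ((b0-a0)^2 - a0^2) * v i - 2 * (lm * (lm * c i)) - (2*a1 - b0) * L c i - (b1*(b0 - 2*a0)) * c i = 0"
      unfolding LXLc XLLc unfolding XLc LLc by simp
    then have "L (L v) i - 2 * (lm * L v i) + lm * (lm * v i) - 2*a0 * (L v i + lm * v i)
     - ((b0-a0)^2 - a0^2) * v i - 2 * (lm * (lm * c i)) - (2*a1 - b0) * (lm * c i) - (b1*(b0 - 2*a0)) * c i = 0"
      unfolding Lc by simp
    then show ?thesis unfolding sum_l prod_l Kc_def
      by (simp add: algebra_simps power2_eq_square)
  qed
  have lml: "lm \<noteq> lp" "lm \<noteq> lq" "lp \<noteq> lq"
    using dist[of n "n+1"] dist[of "n-1" n] dist[of "n-1" "n+1"] n1 unfolding lm_def lp_def lq_def by auto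
  define \<alpha> where "\<alpha> = Kc / ((lm - lp) * (lm - lq))"
  define w where "w i = v i - \<alpha> * c i" for i
  have Lw: "L w i = L v i - \<alpha> * (lm * c i)" for i
  proof -
    have "L w i = L v i - \<alpha> * L c i" unfolding w_def L_def Ls_def by (simp add: algebra_simps)
    then show ?thesis using e0[of i] lm_def by simp
  qed
  have LLw: "L (L w) i = L (L v) i - \<alpha> * (lm * (lm * c i))" for i
  proof -
    have Lwf: "L w = (\<lambda>i. L v i - \<alpha> * (lm * c i))" using Lw by auto
    have "L (L w) i = L (L v) i - \<alpha> * lm * L c i" unfolding Lwf unfolding L_def Ls_def by (simp add: algebra_simps)
    then show ?thesis using e0[of i] lm_def by simp
  qed
  have Ww: "L (L w) i - (lp + lq) * L w i + lp*lq * w i = 0" for i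
  proof -
    have "L (L w) i - (lp + lq) * L w i + lp*lq * w i = Kc * c i - \<alpha> * ((lm - lp) * (lm - lq)) * c i"
      unfolding LLw Lw w_def using AWv[of i] by (simp add: algebra_simps)
    also have "\<dots> = 0" unfolding \<alpha>_def using lml by simp
    finally show ?thesis .
  qed
  define y where "y i = L w i - lq * w i" for i
  have sv: "supp_in v (n+1)" unfolding v_def X_def using Xs_supp[OF s0] .
  have sw: "supp_in w (n+1)" using sv supp_mono[OF s0, of "n+1"] unfolding supp_in_def w_def by auto
  have sLw: "supp_in (L w) (n+1)" unfolding L_def by (rule Ls_supp[OF sw])
  have sy: "supp_in y (n+1)" using sw sLw unfolding supp_in_def y_def by auto
  have Ly: "L y i = lp * y i" for i
  proof -
    have "L y i = L (L w) i - lq * L w i" unfolding y_def L_def Ls_def by (simp add: algebra_simps)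
    then show ?thesis using Ww[of i] unfolding y_def by (simp add: algebra_simps)
  qed
  define y' where "y' i = y i - y (n+1) * cp i" for i
  have Ly': "L y' i = lp * y' i" for i
  proof -
    have "L y' i = L y i - y (n+1) * L cp i" unfolding y'_def L_def by (rule Ls_sub)
    then show ?thesis using Ly[of i] ep[of i] unfolding y'_def lp_def by (simp add: algebra_simps)
  qed
  have y'0: "y' i = 0" if "-1 < i" for i
  proof (rule kernel[where y=y' and M=n and K="-1" and lm=lp])
    show "Ls c2 c3 a0 a1 a2 b0 b1 y' i = lp * y' i" for i using Ly' unfolding L_def .
    show "y' i = 0" if "n < i" for i
    proof (cases "i = n+1")
      case True then show ?thesis unfolding y'_def using tp by simp
    next
      case False then show ?thesis using that sy sp unfolding y'_def supp_in_def by auto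
    qed
    show "lam a0 b0 i \<noteq> lp" if "-1 < i" "i \<le> n" for i
      using dist[of i "n+1"] that unfolding lp_def by auto
  qed (rule that)
  have yeq: "y i = y (n+1) * cp i" for i
  proof (cases "i < 0")
    case True then show ?thesis using sy sp unfolding supp_in_def by auto
  next
    case False then show ?thesis using y'0[of i] unfolding y'_def by auto
  qed
  define A where "A = y (n+1) / (lp - lq)"
  define z where "z i = w i - A * cp i" for i
  have Lz: "L z i = lq * z i" for i
  proof -
    have "L z i = L w i - A * L cp i" unfolding z_def L_def by (rule Ls_sub)
    then have "L z i = L w i - A * (lp * cp i)" using ep[of i] unfolding lp_def by simp
    also have "\<dots> = lq * w i + y i - A * (lp * cp i)" unfolding y_def by simp
    also have "\<dots> = lq * z i + (y (n+1) - A * (lp - lq)) * cp i" unfolding z_def yeq[of i] by (simp add: algebra_simps)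
    also have "y (n+1) - A * (lp - lq) = 0" unfolding A_def using lml by simp
    finally show ?thesis by simp
  qed
  have sz: "supp_in z (n+1)" using sw sp unfolding supp_in_def z_def by auto
  define z' where "z' i = z i - z (n-1) * cm i" for i
  have Lz': "L z' i = lq * z' i" for i
  proof -
    have "L z' i = L z i - z (n-1) * L cm i" unfolding z'_def L_def by (rule Ls_sub)
    then show ?thesis using Lz[of i] em[of i] unfolding z'_def lq_def by (simp add: algebra_simps)
  qed
  have z'a: "z' i = 0" if "n - 1 < i" for i
  proof (rule kernel[where y=z' and M="n+1" and K="n-1" and lm=lq])
    show "Ls c2 c3 a0 a1 a2 b0 b1 z' i = lq * z' i" for i using Lz' unfolding L_def .
    show "z' i = 0" if "n + 1 < i" for i using that sz sm unfolding z'_def supp_in_def by auto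
    show "lam a0 b0 i \<noteq> lq" if "n - 1 < i" "i \<le> n + 1" for i
      using dist[of "n-1" i] that n1 unfolding lq_def by auto
  qed (rule that)
  have z'b: "z' i = 0" if "-1 < i" for i
  proof (rule kernel[where y=z' and M="n-2" and K="-1" and lm=lq])
    show "Ls c2 c3 a0 a1 a2 b0 b1 z' i = lq * z' i" for i using Lz' unfolding L_def .
    show "z' i = 0" if "n - 2 < i" for i
    proof (cases "i = n - 1")
      case True then show ?thesis unfolding z'_def using tm by simp
    next
      case False then show ?thesis using z'a that by auto
    qed
    show "lam a0 b0 i \<noteq> lq" if "-1 < i" "i \<le> n - 2" for i
      using dist[of i "n-1"] that unfolding lq_def by auto
  qed (rule that)
  have zeq: "z i = z (n-1) * cm i" for i
  proof (cases "i < 0")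
    case True then show ?thesis using sz sm unfolding supp_in_def by auto
  next
    case False then show ?thesis using z'b[of i] unfolding z'_def by auto
  qed
  have "X c i = A * cp i + \<alpha> * c i + z (n-1) * cm i" for i
  proof -
    have "X c i = w i + \<alpha> * c i" unfolding w_def v_def by simp
    also have "\<dots> = z i + A * cp i + \<alpha> * c i" unfolding z_def by simp
    finally show ?thesis unfolding zeq[of i] by simp
  qed
  then show ?thesis by blast
qed


lemma distinct_lam:
  fixes c2 c3 a0 a1 a2 b0 b1 :: real and P :: "nat \<Rightarrow> real poly"
  assumes Pn: "\<forall>n. degree (P n) = n \<and> lead_coeff (P n) = 1 \<and> L_zero c2 c3 a0 a1 a2 b0 b1 n (P n)"
    and uniq: "\<forall>n q. degree q = n \<and> lead_coeff q = 1 \<and> L_zero c2 c3 a0 a1 a2 b0 b1 n q \<longrightarrow> q = P n"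
    and ij: "i < j"
  shows "lam a0 b0 (int i) \<noteq> lam a0 b0 (int j)"
proof
  assume eq: "lam a0 b0 (int i) = lam a0 b0 (int j)"
  have di: "degree (P i) = i" and dj: "degree (P j) = j" and li: "lead_coeff (P i) = 1" and lj: "lead_coeff (P j) = 1"
    using Pn by blast+
  have deg: "degree (P j + P i) = j" using di dj ij by (subst degree_add_eq_left) auto
  have lc: "lead_coeff (P j + P i) = 1"
    using lead_coeff_add_le[of "P i" "P j"] di dj ij lj by (simp add: add.commute)
  have Li: "L_zero c2 c3 a0 a1 a2 b0 b1 i (P i)" and Lj: "L_zero c2 c3 a0 a1 a2 b0 b1 j (P j)" using Pn by auto
  have "L_zero c2 c3 a0 a1 a2 b0 b1 j (P j + P i)"
    unfolding L_zero_iff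
  proof (intro allI impI)
    fix t assume v: "2*t + c2 \<notin> {-1, 0, 1}"
    have "Lf c2 c3 a0 a1 a2 b0 b1 (\<lambda>s. poly (P j + P i) (mu c2 c3 s)) t
       = Lf c2 c3 a0 a1 a2 b0 b1 (\<lambda>s. poly (P j) (mu c2 c3 s) + poly (P i) (mu c2 c3 s)) t" by simp
    also have "\<dots> = Lf c2 c3 a0 a1 a2 b0 b1 (\<lambda>s. poly (P j) (mu c2 c3 s)) t + Lf c2 c3 a0 a1 a2 b0 b1 (\<lambda>s. poly (P i) (mu c2 c3 s)) t"
      by (rule Lf_add)
    also have "\<dots> = lam a0 b0 (int j) * poly (P j) (mu c2 c3 t) + lam a0 b0 (int i) * poly (P i) (mu c2 c3 t)"
      using Li Lj v unfolding L_zero_iff by auto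
    finally show "Lf c2 c3 a0 a1 a2 b0 b1 (\<lambda>s. poly (P j + P i) (mu c2 c3 s)) t = lam a0 b0 (int j) * poly (P j + P i) (mu c2 c3 t)"
      using eq by (simp add: algebra_simps)
  qed
  then have "P j + P i = P j" using uniq deg lc by blast
  then have "P i = 0" by simp
  then show False using li by simp
qed

theorem lemma4p4:
  fixes c2 c3 a0 a1 a2 b0 b1 :: real
    and P :: "nat \<Rightarrow> real poly"
    and p :: "nat \<Rightarrow> nat \<Rightarrow> real"
  assumes Pn: "\<forall>n. degree (P n) = n \<and> lead_coeff (P n) = 1 \<and> L_zero c2 c3 a0 a1 a2 b0 b1 n (P n)"
    and uniq: "\<forall>n q. degree q = n \<and> lead_coeff q = 1 \<and> L_zero c2 c3 a0 a1 a2 b0 b1 n q \<longrightarrow> q = P n"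
    and expand: "\<forall>n t. poly (P n) (mu c2 c3 t) = (\<Sum>k\<le>n. p n k * theta c2 (n - k) t)"
    and beyond: "\<forall>n k. n < k \<longrightarrow> p n k = 0"
  shows "\<exists>\<beta> \<gamma> :: nat \<Rightarrow> real.
     (\<forall>n. \<beta> n = p n 1 + fseq c2 c3 (int n)
                 + k1 c2 c3 a0 a1 b0 b1 (int n + 1) / (lam a0 b0 (int n) - lam a0 b0 (int n + 1)))
   \<and> (\<forall>n. \<gamma> n =
          (k2 c2 c3 a0 a1 a2 b0 b1 (int n + 1)
           + (fseq c2 c3 (int n) + p n 1 - \<beta> n) * k1 c2 c3 a0 a1 b0 b1 (int n)
           + (p n 1 * fseq c2 c3 (int n - 1) + p n 2 - \<beta> n * p n 1)
             * (lam a0 b0 (int n - 1) - lam a0 b0 (int n + 1)))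
          / (lam a0 b0 (int n - 1) - lam a0 b0 (int n + 1)))
   \<and> (\<forall>n. P (Suc n) = [:- \<beta> n, 1:] * P n - smult (\<gamma> n) (if n = 0 then 0 else P (n - 1)))"
proof -
  let ?lam = "lam a0 b0" and ?k1 = "k1 c2 c3 a0 a1 b0 b1" and ?k2 = "k2 c2 c3 a0 a1 a2 b0 b1" and ?f = "fseq c2 c3"
  let ?L = "Ls c2 c3 a0 a1 a2 b0 b1" and ?X = "Xs c2 c3"
  define bt where "bt n = p n 1 + ?f (int n) + ?k1 (int n + 1) / (?lam (int n) - ?lam (int n + 1))" for n
  define gm where "gm n = (?k2 (int n + 1) + (?f (int n) + p n 1 - bt n) * ?k1 (int n)
           + (p n 1 * ?f (int n - 1) + p n 2 - bt n * p n 1) * (?lam (int n - 1) - ?lam (int n + 1)))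
          / (?lam (int n - 1) - ?lam (int n + 1))" for n
  define cP where "cP m i = (if 0 \<le> i \<and> i \<le> int m then p m (nat (int m - i)) else 0)" for m i
  have dist: "?lam a \<noteq> ?lam b" if "0 \<le> a" "a < b" for a b
    using distinct_lam[OF Pn uniq, of "nat a" "nat b"] that by simp
  have supp: "supp_in (cP m) (int m)" for m unfolding supp_in_def cP_def by auto
  have cP_idx: "cP m (int m - int k) = p m k" for m k
    using beyond unfolding cP_def by (auto simp: of_nat_diff)
  have rep: "poly (P m) (mu c2 c3 t) = (\<Sum>j\<in>{0..int m}. cP m j * thz c2 j t)" for m t
  proof -
    have "(\<Sum>j\<in>{0..int m}. cP m j * thz c2 j t) = (\<Sum>k\<le>m. cP m (int k) * thz c2 (int k) t)"
      by (rule sum_int_nat)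
    also have "\<dots> = (\<Sum>k\<le>m. p m (m - k) * theta c2 k t)"
      by (rule sum.cong) (auto simp: cP_def thz_def nat_diff_distrib)
    also have "\<dots> = (\<Sum>k\<le>m. p m k * theta c2 (m - k) t)"
      by (rule sum.reindex_bij_witness[of _ "\<lambda>k. m - k" "\<lambda>k. m - k"]) auto
    finally show ?thesis using expand by simp
  qed
  have Ppoly: "P m = (\<Sum>j\<in>{0..int m}. smult (cP m j) (Tp c2 c3 (nat j)))" for m
  proof -
    have "P m - (\<Sum>j\<in>{0..int m}. smult (cP m j) (Tp c2 c3 (nat j))) = 0"
      by (rule poly_zero_valid[of c2 _ c3]) (simp add: rep sum_thz_poly[where ?c3.0=c3])
    then show ?thesis by simp
  qed
  have top1: "p m 0 = 1" for m
  proof -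
    have "coeff (P m) m = 1" using Pn by (metis)
    moreover have "coeff (P m) m = cP m (int m)" by (subst Ppoly) (rule coeff_top)
    ultimately show ?thesis using cP_idx[of m 0] by simp
  qed
  have eig: "?L (cP m) i = ?lam (int m) * cP m i" for m i
  proof -
    have inr: "\<forall>j\<in>{0..int m}. ?L (cP m) j - ?lam (int m) * cP m j = 0"
    proof (rule coords_unique)
      fix t assume v: "2*t + c2 \<notin> {-1, 0, 1}"
      have F: "(\<lambda>s. poly (P m) (mu c2 c3 s)) = (\<lambda>s. \<Sum>j\<in>{0..int m}. cP m j * thz c2 j s)"
        using rep by auto
      have "Lf c2 c3 a0 a1 a2 b0 b1 (\<lambda>s. poly (P m) (mu c2 c3 s)) t = ?lam (int m) * poly (P m) (mu c2 c3 t)"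
        using Pn v unfolding L_zero_iff by auto
      then have "(\<Sum>j\<in>{0..int m}. ?L (cP m) j * thz c2 j t) = ?lam (int m) * (\<Sum>j\<in>{0..int m}. cP m j * thz c2 j t)"
        unfolding F Lf_coords[OF v supp] rep .
      then show "(\<Sum>j\<in>{0..int m}. (?L (cP m) j - ?lam (int m) * cP m j) * thz c2 j t) = 0"
        by (simp add: sum_distrib_left left_diff_distrib sum_subtractf algebra_simps)
    qed
    show ?thesis
    proof (cases "0 \<le> i \<and> i \<le> int m")
      case True then show ?thesis using inr by auto
    next
      case False then show ?thesis using Ls_supp[OF supp, of c2 c3 a0 a1 a2 b0 b1 m] supp[of m]
        unfolding supp_in_def by auto
    qed
  qed
  have rec: "P (Suc n) = [:- bt n, 1:] * P n - smult (gm n) (if n = 0 then 0 else P (n - 1))" for n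
  proof (cases "n = 0")
    case True
    define \<alpha> where "\<alpha> = ?f 0 - p 1 1"
    have c0: "cP 0 i = (if i = 0 then 1 else 0)" for i using top1[of 0] unfolding cP_def by auto
    have c1: "cP 1 i = (if i = 0 then p 1 1 else if i = 1 then 1 else 0)" for i
      using top1[of 1] unfolding cP_def by auto
    have X: "?X (cP 0) i = cP 1 i + \<alpha> * cP 0 i + 0 * (\<lambda>_. 0) i" for i
      unfolding Xs_def c0 c1 \<alpha>_def by auto
    have E: "?L (cP 1) 0 = ?lam 1 * cP 1 0" using eig[of 1 0] by simp
    then have "?lam 0 * p 1 1 + ?k1 1 = ?lam 1 * p 1 1" unfolding Ls_def c1 by simp
    moreover have "?lam 0 = 0" by (simp add: lam_def)
    moreover have "?lam 1 \<noteq> 0" using dist[of 0 1] by (simp add: lam_def)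
    ultimately have p11: "p 1 1 = ?k1 1 / ?lam 1" by (simp add: field_simps)
    have ab: "\<alpha> = bt 0" unfolding \<alpha>_def bt_def p11 using beyond \<open>?lam 0 = 0\<close> by simp
    have "P 1 = [:- \<alpha>, 1:] * P 0 - smult 0 0"
    proof (rule translate[where N=0 and c="cP 0" and cp="cP 1" and d="\<lambda>_. 0" and ?c2.0=c2 and ?c3.0=c3])
      show "poly (P 1) (mu c2 c3 t) = (\<Sum>j\<in>{0..0+1}. cP 1 j * thz c2 j t)" for t using rep[of 1 t] by simp
      show "poly (P 0) (mu c2 c3 t) = (\<Sum>j\<in>{0..0}. cP 0 j * thz c2 j t)" for t using rep[of 0 t] by simp
      show "poly 0 (mu c2 c3 t) = (\<Sum>j\<in>{0..0+1}. 0 * thz c2 j t)" for t by simp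
      show "supp_in (cP 0) 0" using supp[of 0] by simp
    qed (use X in auto)
    then show ?thesis using True ab by simp
  next
    case False
    then obtain m where n: "n = Suc m" by (cases n) auto
    have n1: "(1::int) \<le> int n" using n by simp
    have im: "int (n - 1) = int n - 1" using n by simp
    obtain \<alpha> A B where X: "\<forall>i. ?X (cP n) i = A * cP (Suc n) i + \<alpha> * cP n i + B * cP (n-1) i"
    proof -
      have "\<exists>\<alpha> A B. \<forall>i. ?X (cP n) i = A * cP (Suc n) i + \<alpha> * cP n i + B * cP (n-1) i"
      proof (rule coord_rec[where n="int n"])
        show "?L (cP (n-1)) i = ?lam (int n - 1) * cP (n-1) i" for i using eig[of "n-1" i] im by simp
        show "?L (cP n) i = ?lam (int n) * cP n i" for i using eig[of n i] by simp
        show "?L (cP (Suc n)) i = ?lam (int n + 1) * cP (Suc n) i" for i using eig[of "Suc n" i] by (simp add: add.commute)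
        show "supp_in (cP (n-1)) (int n - 1)" using supp[of "n-1"] im by simp
        show "supp_in (cP n) (int n)" by (rule supp)
        show "supp_in (cP (Suc n)) (int n + 1)" using supp[of "Suc n"] by (simp add: add.commute)
        show "cP (n-1) (int n - 1) = 1" using cP_idx[of "n-1" 0] top1[of "n-1"] im by simp
        show "cP (Suc n) (int n + 1) = 1" using cP_idx[of "Suc n" 0] top1[of "Suc n"] by (simp add: add.commute)
        show "1 \<le> int n" by (rule n1)
        show "\<And>a b. 0 \<le> a \<Longrightarrow> a < b \<Longrightarrow> ?lam a \<noteq> ?lam b" by (rule dist)
      qed
      then show ?thesis using that by blast
    qed
    have cn: "cP n (int n) = 1" "cP n (int n - 1) = p n 1" "cP n (int n - 2) = p n 2" "cP n (int n + 1) = 0"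
      using cP_idx[of n 0] cP_idx[of n 1] cP_idx[of n 2] top1[of n] supp[of n] unfolding supp_in_def by auto
    have cpn: "cP (Suc n) (int n + 1) = 1" "cP (Suc n) (int n) = p (Suc n) 1" "cP (Suc n) (int n - 1) = p (Suc n) 2"
      "cP (Suc n) (int n + 2) = 0"
      using cP_idx[of "Suc n" 0] cP_idx[of "Suc n" 1] cP_idx[of "Suc n" 2] top1[of "Suc n"] supp[of "Suc n"]
      unfolding supp_in_def by (auto simp: add.commute)
    have cmn: "cP (n-1) (int n - 1) = 1" "cP (n-1) (int n) = 0" "cP (n-1) (int n + 1) = 0"
      using cP_idx[of "n-1" 0] top1[of "n-1"] supp[of "n-1"] im unfolding supp_in_def by auto
    have XA: "?X (cP n) (int n + 1) = A" using X[rule_format, of "int n + 1"] cn cpn cmn unfolding Xs_def by simp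
    have XA': "?X (cP n) (int n + 1) = 1" using cn unfolding Xs_def by simp
    have A1: "A = 1" using XA XA' by simp
    have Xn: "p n 1 + ?f (int n) = p (Suc n) 1 + \<alpha>"
      using X[rule_format, of "int n"] cn cpn cmn A1 unfolding Xs_def by simp
    have Xm: "p n 2 + ?f (int n - 1) * p n 1 = p (Suc n) 2 + \<alpha> * p n 1 + B"
      using X[rule_format, of "int n - 1"] cn cpn cmn A1 unfolding Xs_def by (simp add: algebra_simps)
    have E1: "?lam (int n) * p (Suc n) 1 + ?k1 (int n + 1) = ?lam (int n + 1) * p (Suc n) 1"
      using eig[of "Suc n" "int n"] cpn unfolding Ls_def by (simp add: add.commute)
    have E2: "?lam (int n - 1) * p (Suc n) 2 + ?k1 (int n) * p (Suc n) 1 + ?k2 (int n + 1) = ?lam (int n + 1) * p (Suc n) 2"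
      using eig[of "Suc n" "int n - 1"] cpn unfolding Ls_def by (simp add: algebra_simps)
    have d1: "?lam (int n) - ?lam (int n + 1) \<noteq> 0" using dist[of "int n" "int n + 1"] by simp
    have d2: "?lam (int n - 1) - ?lam (int n + 1) \<noteq> 0" using dist[of "int n - 1" "int n + 1"] n1 by simp
    have ab: "\<alpha> = bt n"
    proof -
      have "p (Suc n) 1 = - ?k1 (int n + 1) / (?lam (int n) - ?lam (int n + 1))"
        using E1 d1 by (simp add: field_simps)
      then show ?thesis unfolding bt_def using Xn by (simp add: field_simps)
    qed
    have bg: "B = gm n"
    proof -
      have "gm n = (?k2 (int n + 1) + (?f (int n) + p n 1 - \<alpha>) * ?k1 (int n)
           + (p n 1 * ?f (int n - 1) + p n 2 - \<alpha> * p n 1) * (?lam (int n - 1) - ?lam (int n + 1)))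
          / (?lam (int n - 1) - ?lam (int n + 1))" unfolding gm_def ab ..
      also have "\<dots> = B"
      proof -
        have p1: "p (Suc n) 1 = ?f (int n) + p n 1 - \<alpha>" using Xn by simp
        have E2': "?k2 (int n + 1) + (?f (int n) + p n 1 - \<alpha>) * ?k1 (int n) = - p (Suc n) 2 * (?lam (int n - 1) - ?lam (int n + 1))"
          using E2 unfolding p1 by (simp add: algebra_simps)
        have Bx: "B = p n 2 + ?f (int n - 1) * p n 1 - \<alpha> * p n 1 - p (Suc n) 2" using Xm by simp
        show ?thesis unfolding E2' Bx using d2 by (simp add: field_simps)
      qed
      finally show ?thesis by simp
    qed
    have "P (Suc n) = [:- \<alpha>, 1:] * P n - smult B (P (n-1))"
    proof (rule translate[where N="int n" and c="cP n" and cp="cP (Suc n)" and d="cP (n-1)" and ?c2.0=c2 and ?c3.0=c3])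
      show "poly (P (Suc n)) (mu c2 c3 t) = (\<Sum>j\<in>{0..int n + 1}. cP (Suc n) j * thz c2 j t)" for t
        using rep[of "Suc n" t] by (simp add: add.commute)
      show "poly (P n) (mu c2 c3 t) = (\<Sum>j\<in>{0..int n}. cP n j * thz c2 j t)" for t by (rule rep)
      show "poly (P (n-1)) (mu c2 c3 t) = (\<Sum>j\<in>{0..int n + 1}. cP (n-1) j * thz c2 j t)" for t
        using rep[of "n-1" t] sum_extend[OF supp[of "n-1"], of "int n + 1" "\<lambda>j. thz c2 j t"] by simp
      show "supp_in (cP n) (int n)" by (rule supp)
      show "Xs c2 c3 (cP n) i = cP (Suc n) i + \<alpha> * cP n i + B * cP (n - 1) i" for i using X A1 by simp
    qed simp
    then show ?thesis using False ab bg by simp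
  qed
  show ?thesis
    by (rule exI[of _ bt], rule exI[of _ gm]) (use rec in \<open>auto simp: bt_def gm_def\<close>)
qed


end
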